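(* For $n\in\mathbb Z$ let $W_n(k)=\mathrm{diag}(R(nk),R(nk))\in SO(4)$, where $R(\theta)=\begin{pmatrix}\cos\theta&\sin\theta\\-\sin\theta&\cos\theta\end{pmatrix}$. Then $W_n$ is a symmetric loop, null-homotopic in $SO(4)$, its lift with $\tilde W_n(0)=(1,1)$ is $\tilde W_n(k)=(\cos nk+i\sin nk,\ 1)$, so $\tilde W_n(\pi)=((-1)^n,1)$, and $W_n$ is symmetrically homotopic to the constant loop $I_4$ if and only if $n$ is even.
   Context: Identify $\mathbb H$ with $\mathbb R^4$ via $x_0+x_1i+x_2j+x_3k\leftrightarrow(x_0,x_1,x_2,x_3)^T$; $Sp(1)$ is the group of unit quaternions. Let $p:Sp(1)\times Sp(1)\to SO(4)$ send $(g,h)$ to the matrix of $x\mapsto g^{-1}xh$. Let $w=\begin{pmatrix}0&-I_2\\ I_2&0\end{pmatrix}$. A symmetric loop is a continuous $2\pi$-periodic map $W:\mathbb R\to SO(4)$ with $wW(k)w^{-1}=W(-k)^{-1}$ for all $k$. A symmetric homotopy is a continuous $H:\mathbb R\times[0,1]\to SO(4)$ such that $H(\cdot,t)$ is a symmetric loop for every $t$. A lift of $W$ is a continuous $\tilde W:\mathbb R\to Sp(1)\times Sp(1)$ with $p\circ\tilde W=W$. *)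

theory Defs
  imports "HOL-Analysis.Analysis"
begin

text \<open>Quaternions identified with real^4 via x0 + x1 i + x2 j + x3 k <-> (x0,x1,x2,x3);
  component x_m is the entry with index m+1 (entries of vector lists are indexed 1,2,3,4).\<close>

type_synonym quat = "real^4"

definition qmk :: "real \<Rightarrow> real \<Rightarrow> real \<Rightarrow> real \<Rightarrow> quat" where
  "qmk a b c d = vector [a, b, c, d]"

definition qmult :: "quat \<Rightarrow> quat \<Rightarrow> quat" where
  "qmult x y = qmk
     (x$1 * y$1 - x$2 * y$2 - x$3 * y$3 - x$4 * y$4)
     (x$1 * y$2 + x$2 * y$1 + x$3 * y$4 - x$4 * y$3)
     (x$1 * y$3 - x$2 * y$4 + x$3 * y$1 + x$4 * y$2)
     (x$1 * y$4 + x$2 * y$3 - x$3 * y$2 + x$4 * y$1)"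

definition qconj :: "quat \<Rightarrow> quat" where
  "qconj x = qmk (x$1) (- x$2) (- x$3) (- x$4)"

definition qinv :: "quat \<Rightarrow> quat" where
  "qinv x = (1 / (norm x)^2) *\<^sub>R qconj x"

definition Sp1 :: "quat set" where
  "Sp1 = {q. norm q = 1}"

definition SO4 :: "(real^4^4) set" where
  "SO4 = {A. rotation_matrix A}"

definition pmap :: "quat \<times> quat \<Rightarrow> real^4^4" where
  "pmap gh = matrix (\<lambda>x. qmult (qinv (fst gh)) (qmult x (snd gh)))"

definition wmat :: "real^4^4" where
  "wmat = vector [vector [0, 0, -1, 0],
                  vector [0, 0, 0, -1],
                  vector [1, 0, 0, 0],
                  vector [0, 1, 0, 0]]"

definition symmetric_loop :: "(real \<Rightarrow> real^4^4) \<Rightarrow> bool" where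
  "symmetric_loop W \<longleftrightarrow>
     continuous_on UNIV W \<and> (\<forall>k. W k \<in> SO4) \<and> (\<forall>k. W (k + 2 * pi) = W k) \<and>
     (\<forall>k. wmat ** W k ** matrix_inv wmat = matrix_inv (W (- k)))"

definition symmetric_homotopy :: "(real \<times> real \<Rightarrow> real^4^4) \<Rightarrow> bool" where
  "symmetric_homotopy H \<longleftrightarrow>
     continuous_on (UNIV \<times> {0..1}) H \<and> (\<forall>t\<in>{0..1}. symmetric_loop (\<lambda>k. H (k, t)))"

definition is_lift :: "(real \<Rightarrow> quat \<times> quat) \<Rightarrow> (real \<Rightarrow> real^4^4) \<Rightarrow> bool" where
  "is_lift L W \<longleftrightarrow> continuous_on UNIV L \<and> (\<forall>k. L k \<in> Sp1 \<times> Sp1) \<and> (\<forall>k. pmap (L k) = W k)"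

definition loop_homotopic_SO4 :: "(real \<Rightarrow> real^4^4) \<Rightarrow> (real \<Rightarrow> real^4^4) \<Rightarrow> bool" where
  "loop_homotopic_SO4 V W \<longleftrightarrow>
     (\<exists>H :: real \<times> real \<Rightarrow> real^4^4.
        continuous_on (UNIV \<times> {0..1}) H \<and> (\<forall>x \<in> UNIV \<times> {0..1}. H x \<in> SO4) \<and>
        (\<forall>k t. t \<in> {0..1} \<longrightarrow> H (k + 2 * pi, t) = H (k, t)) \<and>
        (\<forall>k. H (k, 0) = V k) \<and> (\<forall>k. H (k, 1) = W k))"

definition Wn :: "int \<Rightarrow> real \<Rightarrow> real^4^4" where
  "Wn n k = (let c = cos (of_int n * k); s = sin (of_int n * k) in
     vector [vector [c, s, 0, 0],
             vector [-s, c, 0, 0],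
             vector [0, 0, c, s],
             vector [0, 0, -s, c]])"

definition Wn_lift :: "int \<Rightarrow> real \<Rightarrow> quat \<times> quat" where
  "Wn_lift n k = (qmk (cos (of_int n * k)) (sin (of_int n * k)) 0 0, qmk 1 0 0 0)"

end

theory Submission
  imports Defs
begin

lemma qmk_nth [simp]:
  "qmk a b c d $ 1 = a" "qmk a b c d $ 2 = b" "qmk a b c d $ 3 = c" "qmk a b c d $ 4 = d"
  by (simp_all add: qmk_def vector_def)

lemma quat_eq_iff: "(x::quat) = y \<longleftrightarrow> x$1 = y$1 \<and> x$2 = y$2 \<and> x$3 = y$3 \<and> x$4 = y$4"
  by (simp add: vec_eq_iff forall_4)

lemma quat_norm2: "(norm (x::quat))^2 = x$1^2 + x$2^2 + x$3^2 + x$4^2"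
  by (simp add: norm_vec_def L2_set_def sum_4 real_norm_def)

lemma quat_inner: "(x::quat) \<bullet> y = x$1*y$1 + x$2*y$2 + x$3*y$3 + x$4*y$4"
  by (simp add: inner_vec_def sum_4)

lemma qmult_nth [simp]:
  "qmult x y $ 1 = x$1 * y$1 - x$2 * y$2 - x$3 * y$3 - x$4 * y$4"
  "qmult x y $ 2 = x$1 * y$2 + x$2 * y$1 + x$3 * y$4 - x$4 * y$3"
  "qmult x y $ 3 = x$1 * y$3 - x$2 * y$4 + x$3 * y$1 + x$4 * y$2"
  "qmult x y $ 4 = x$1 * y$4 + x$2 * y$3 - x$3 * y$2 + x$4 * y$1"
  by (simp_all add: qmult_def)

lemma qconj_nth [simp]:
  "qconj x $ 1 = x$1" "qconj x $ 2 = - x$2" "qconj x $ 3 = - x$3" "qconj x $ 4 = - x$4"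
  by (simp_all add: qconj_def)

lemma qmult_assoc: "qmult (qmult x y) z = qmult x (qmult y z)"
  by (simp add: quat_eq_iff algebra_simps)

lemma qconj_qmult: "qconj (qmult x y) = qmult (qconj y) (qconj x)"
  by (simp add: quat_eq_iff algebra_simps)

lemma qconj_qconj [simp]: "qconj (qconj x) = x"
  by (simp add: quat_eq_iff)

abbreviation "q1 \<equiv> qmk 1 0 0 0"

lemma qmult_one [simp]: "qmult q1 x = x" "qmult x q1 = x"
  by (simp_all add: quat_eq_iff)

lemma qmult_conj_right: "qmult x (qconj x) = (norm x)^2 *\<^sub>R q1"
  using quat_norm2[of x] by (simp add: quat_eq_iff quat_norm2 algebra_simps power2_eq_square)

lemma qmult_conj_left: "qmult (qconj x) x = (norm x)^2 *\<^sub>R q1"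
  using quat_norm2[of x] by (simp add: quat_eq_iff quat_norm2 algebra_simps power2_eq_square)

lemma qnorm_mult: "norm (qmult x y) = norm x * norm y"
proof -
  have "(norm (qmult x y))^2 = (norm x * norm y)^2"
    unfolding power_mult_distrib quat_norm2 by (simp add: algebra_simps power2_eq_square)
  then show ?thesis by (simp add: power2_eq_iff_nonneg)
qed

lemma qnorm_conj [simp]: "norm (qconj x) = norm x"
proof -
  have "(norm (qconj x))^2 = (norm x)^2"
    unfolding quat_norm2 by simp
  then show ?thesis by (simp add: power2_eq_iff_nonneg)
qed

lemma qmult_scaleR [simp]: "qmult (c *\<^sub>R x) y = c *\<^sub>R qmult x y" "qmult x (c *\<^sub>R y) = c *\<^sub>R qmult x y"
  by (simp_all add: quat_eq_iff algebra_simps)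

lemma qmult_add: "qmult (x + y) z = qmult x z + qmult y z" "qmult z (x + y) = qmult z x + qmult z y"
  by (simp_all add: quat_eq_iff algebra_simps)

lemma qmult_minus [simp]: "qmult (- x) y = - qmult x y" "qmult x (- y) = - qmult x y"
  by (simp_all add: quat_eq_iff algebra_simps)

lemma qconj_minus [simp]: "qconj (- x) = - qconj x"
  by (simp add: quat_eq_iff)

lemma qinv_unit: "norm x = 1 \<Longrightarrow> qinv x = qconj x"
  by (simp add: qinv_def)

lemma unit_conj_left: "norm x = 1 \<Longrightarrow> qmult (qconj x) x = q1"
  by (simp add: qmult_conj_left)

lemma unit_conj_right: "norm x = 1 \<Longrightarrow> qmult x (qconj x) = q1"
  by (simp add: qmult_conj_right)

lemma qinner_mult_left: "qmult c a \<bullet> qmult c b = (norm c)^2 * (a \<bullet> b)"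
  unfolding quat_inner quat_norm2 by (simp add: algebra_simps power2_eq_square)

lemma qinner_mult_right: "qmult a c \<bullet> qmult b c = (norm c)^2 * (a \<bullet> b)"
  unfolding quat_inner quat_norm2 by (simp add: algebra_simps power2_eq_square)

definition qact :: "quat \<Rightarrow> quat \<Rightarrow> quat \<Rightarrow> quat" where
  "qact g h x = qmult (qconj g) (qmult x h)"

lemma linear_qact: "linear (qact g h)"
  by (rule linearI) (simp_all add: qact_def qmult_add)

lemma pmap_unit: "norm g = 1 \<Longrightarrow> pmap (g, h) = matrix (qact g h)"
  by (simp add: pmap_def qact_def[abs_def] qinv_unit del: qmult_nth)

lemma pmap_apply: "norm g = 1 \<Longrightarrow> pmap (g, h) *v x = qact g h x"
  using matrix_vector_mul(2)[OF linear_qact, of g h] by (simp add: pmap_unit fun_eq_iff)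

lemma pmap_eq_iff: "norm g = 1 \<Longrightarrow> norm g' = 1 \<Longrightarrow>
   pmap (g, h) = pmap (g', h') \<longleftrightarrow> (\<forall>x. qact g h x = qact g' h' x)"
  by (simp add: matrix_eq pmap_apply)

lemma pmap_mult: "norm a = 1 \<Longrightarrow> norm c = 1 \<Longrightarrow>
   pmap (a, b) ** pmap (c, d) = pmap (qmult c a, qmult d b)"
  by (simp add: matrix_eq pmap_apply qnorm_mult matrix_vector_mul_assoc[symmetric] qact_def
      qconj_qmult qmult_assoc)

abbreviation "qj \<equiv> qmk 0 0 1 0"

lemma vector4_nth [simp]:
  "(vector [a,b,c,d] :: ('a::zero)^4) $ 1 = a" "(vector [a,b,c,d] :: ('a::zero)^4) $ 2 = b"
  "(vector [a,b,c,d] :: ('a::zero)^4) $ 3 = c" "(vector [a,b,c,d] :: ('a::zero)^4) $ 4 = d"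
  unfolding vector_def by auto

lemma qnorm_eq: "norm (x::quat) = sqrt (x$1^2 + x$2^2 + x$3^2 + x$4^2)"
  by (simp add: quat_norm2[symmetric])

lemma norm_basic [simp]: "norm q1 = 1" "norm qj = 1"
  by (simp_all add: qnorm_eq)

lemma continuous_on_qmk[continuous_intros]:
  assumes "continuous_on S a" "continuous_on S b" "continuous_on S c" "continuous_on S d"
  shows "continuous_on S (\<lambda>x. qmk (a x) (b x) (c x) (d x))"
proof -
  have eq: "(\<lambda>x. qmk (a x) (b x) (c x) (d x)) = (\<lambda>x. \<chi> i. qmk (a x) (b x) (c x) (d x) $ i)" by simp
  show ?thesis
    apply (subst eq) apply (rule continuous_on_vec_lambda)
    subgoal for i using exhaust_4[of i] by (auto simp: assms)
    done
qed

lemma continuous_on_qmult[continuous_intros]: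
  "continuous_on S f \<Longrightarrow> continuous_on S g \<Longrightarrow> continuous_on S (\<lambda>x. qmult (f x) (g x))"
  unfolding qmult_def by (intro continuous_intros)

lemma continuous_on_qconj[continuous_intros]:
  "continuous_on S f \<Longrightarrow> continuous_on S (\<lambda>x. qconj (f x))"
  unfolding qconj_def by (intro continuous_intros)

lemma Sp1_sphere: "Sp1 = sphere 0 1"
  by (auto simp: Sp1_def)

lemma compact_C: "compact (Sp1 \<times> Sp1)"
  by (simp add: Sp1_sphere compact_Times)

lemma connected_C: "connected (Sp1 \<times> Sp1)"
  by (simp add: Sp1_sphere connected_Times connected_sphere)

lemma continuous_pmap: "continuous_on (Sp1 \<times> Sp1) pmap"
proof -
  have "continuous_on (Sp1 \<times> Sp1) (\<lambda>x. matrix (qact (fst x) (snd x)))"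
    unfolding matrix_def qact_def by (intro continuous_intros)
  then show ?thesis
    by (rule continuous_on_eq) (auto simp: Sp1_def pmap_unit)
qed

lemma continuous_on_det[continuous_intros]:
  fixes F :: "'a::topological_space \<Rightarrow> real^'n^'n"
  shows "continuous_on S F \<Longrightarrow> continuous_on S (\<lambda>x. det (F x))"
  unfolding det_def by (intro continuous_intros)

lemma orth_qact: "norm g = 1 \<Longrightarrow> norm h = 1 \<Longrightarrow> orthogonal_transformation (qact g h)"
  by (simp add: orthogonal_transformation linear_qact qact_def qnorm_mult)

lemma orth_pmap: "norm g = 1 \<Longrightarrow> norm h = 1 \<Longrightarrow> orthogonal_matrix (pmap (g,h))"
  using orth_qact orthogonal_transformation_matrix pmap_unit by metis

lemma pmap_11: "pmap (q1, q1) = mat 1"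
  by (simp add: matrix_eq pmap_apply qact_def quat_eq_iff)

lemma det_pmap: assumes "norm g = 1" "norm h = 1" shows "det (pmap (g,h)) = 1"
proof -
  let ?D = "\<lambda>x. det (pmap x)"
  have cont: "continuous_on (Sp1 \<times> Sp1) ?D"
    by (intro continuous_intros continuous_pmap)
  have conn: "connected (?D ` (Sp1 \<times> Sp1))"
    using connected_continuous_image[OF cont connected_C] .
  have vals: "\<And>x. x \<in> Sp1 \<times> Sp1 \<Longrightarrow> ?D x = 1 \<or> ?D x = -1"
    using det_orthogonal_matrix orth_pmap by (force simp: Sp1_def)
  have one: "1 \<in> ?D ` (Sp1 \<times> Sp1)"
    by (rule image_eqI[where x="(q1,q1)"]) (simp_all add: pmap_11 Sp1_def)
  show ?thesis
  proof (rule ccontr)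
    assume "det (pmap (g,h)) \<noteq> 1"
    then have "-1 \<in> ?D ` (Sp1 \<times> Sp1)" using vals[of "(g,h)"] assms
      by (force simp: Sp1_def)
    then have "0 \<in> ?D ` (Sp1 \<times> Sp1)"
      using connectedD_interval[OF conn _ one, of "-1" 0] by auto
    then show False using vals by fastforce
  qed
qed

lemma pmap_SO4: "norm g = 1 \<Longrightarrow> norm h = 1 \<Longrightarrow> pmap (g,h) \<in> SO4"
  by (simp add: SO4_def rotation_matrix_def orth_pmap det_pmap)

lemma matrix_inv_eq: fixes A B :: "real^'n^'n"
  assumes "A ** B = mat 1" "B ** A = mat 1" shows "matrix_inv A = B"
proof -
  let ?C = "matrix_inv A"
  have "A ** ?C = mat 1 \<and> ?C ** A = mat 1"
    unfolding matrix_inv_def by (rule someI[of _ B]) (use assms in auto)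
  then have "?C = ?C ** (A ** B)" "?C ** A = mat 1" using assms by auto
  then show ?thesis by (simp add: matrix_mul_assoc)
qed

lemma matrix_inv_pmap: assumes "norm g = 1" "norm h = 1"
  shows "matrix_inv (pmap (g,h)) = pmap (qconj g, qconj h)"
  using assms
  by (intro matrix_inv_eq) (simp_all add: pmap_mult unit_conj_left unit_conj_right pmap_11)


lemma wmat_pmap: "wmat = pmap (q1, qj)"
  by (simp add: pmap_unit quat_norm2 wmat_def vec_eq_iff forall_4 matrix_def qact_def axis_def)

declare unit_conj_left[simp] unit_conj_right[simp]

abbreviation "qi \<equiv> qmk 0 1 0 0"
abbreviation "qk \<equiv> qmk 0 0 0 1"

lemma unit_cancel [simp]:
  "norm a = 1 \<Longrightarrow> qmult a (qmult (qconj a) x) = x"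
  "norm a = 1 \<Longrightarrow> qmult (qconj a) (qmult a x) = x"
  "norm a = 1 \<Longrightarrow> qmult (qmult x a) (qconj a) = x"
  "norm a = 1 \<Longrightarrow> qmult (qmult x (qconj a)) a = x"
  by (simp_all add: qmult_assoc[symmetric] unit_conj_left unit_conj_right)
     (simp_all add: qmult_assoc unit_conj_left unit_conj_right)

lemma fiber_aux:
  assumes u: "norm u = 1" and eq: "\<And>x. qmult u (qmult x v) = x"
  shows "u = q1 \<or> u = - q1" "v = qconj u"
proof -
  have uv: "qmult u v = q1" using eq[of q1] by simp
  show v: "v = qconj u"
  proof -
    have "qmult (qconj u) (qmult u v) = qconj u" using uv by simp
    then show ?thesis using u by simp
  qed
  have comm: "qmult u x = qmult x u" for x
  proof -
    have "qmult (qmult u (qmult x (qconj u))) u = qmult x u" using eq[of x] v by simp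
    then show ?thesis using u by (simp add: qmult_assoc unit_conj_left)
  qed
  have "u$3 = 0 \<and> u$4 = 0" using comm[of qi] by (simp add: quat_eq_iff)
  moreover have "u$2 = 0" using comm[of qj] by (simp add: quat_eq_iff)
  moreover have "(u$1)^2 + (u$2)^2 + (u$3)^2 + (u$4)^2 = 1" using u quat_norm2[of u] by simp
  ultimately have "u$1 = 1 \<or> u$1 = -1" "u$2 = 0" "u$3 = 0" "u$4 = 0"
    by (auto simp: power2_eq_1_iff)
  then show "u = q1 \<or> u = - q1" by (auto simp: quat_eq_iff)
qed

lemma fiber:
  assumes n: "norm g = 1" "norm h = 1" "norm g' = 1" "norm h' = 1"
    and e: "\<And>x. qact g h x = qact g' h' x"
  shows "(g' = g \<and> h' = h) \<or> (g' = - g \<and> h' = - h)"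
proof -
  define u where "u = qmult g' (qconj g)"
  define v where "v = qmult h (qconj h')"
  have nu: "norm u = 1" using n by (simp add: u_def qnorm_mult)
  have s: "qmult u (qmult x v) = x" for x
  proof -
    have "qmult g' (qmult (qact g h x) (qconj h')) = qmult g' (qmult (qact g' h' x) (qconj h'))"
      using e[of x] by simp
    then show ?thesis using n by (simp add: qact_def u_def v_def qmult_assoc unit_conj_right)
  qed
  note f = fiber_aux[OF nu s]
  have g': "g' = qmult u g" using n by (simp add: u_def qmult_assoc)
  have h': "h' = qmult u h"
  proof -
    have "qmult (qconj h) v = qconj h'" using n by (simp add: v_def)
    then have "qconj (qmult (qconj h) v) = h'" by simp
    then show ?thesis using f(2) by (simp add: qconj_qmult)
  qed
  show ?thesis using f(1) g' h' by auto
qed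

lemma pmap_fiber:
  assumes "g \<in> Sp1" "h \<in> Sp1" "g' \<in> Sp1" "h' \<in> Sp1" "pmap (g,h) = pmap (g',h')"
  shows "(g',h') = (g,h) \<or> (g',h') = - (g,h)"
  using assms fiber[of g h g' h'] by (auto simp: Sp1_def pmap_eq_iff)

lemma qconj_scaleR [simp]: "qconj (c *\<^sub>R x) = c *\<^sub>R qconj x"
  by (simp add: quat_eq_iff)

lemma rot_i:
  assumes b1: "b$1 = 0" and nb: "norm b = 1"
  obtains u where "norm u = 1" "qmult (qmult u qi) (qconj u) = b"
proof -
  have sq: "(b$2)^2 + (b$3)^2 + (b$4)^2 = 1" using nb quat_norm2[of b] b1 by simp
  show ?thesis
  proof (cases "b$2 = -1")
    case True
    then have "b$3 = 0" "b$4 = 0" using sq by (auto simp: power2_eq_square)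
    then have "qmult (qmult qj qi) (qconj qj) = b" using True b1 by (simp add: quat_eq_iff)
    then show ?thesis using that[of qj] by simp
  next
    case False
    have "(b$2)^2 \<le> 1" using sq by (smt (verit) zero_le_power2)
    then have "b$2 \<ge> -1" by (simp add: abs_square_le_1 abs_le_iff)
    then have pos: "1 + b$2 > 0" using False by simp
    define r where "r = sqrt (2 * (1 + b$2))"
    have r2: "r^2 = 2 * (1 + b$2)" using pos by (simp add: r_def)
    have rpos: "r > 0" using pos by (simp add: r_def)
    define u0 where "u0 = qmk (1 + b$2) 0 (- b$4) (b$3)"
    define u where "u = (1/r) *\<^sub>R u0"
    have nu0: "(norm u0)^2 = r^2"
      unfolding r2 quat_norm2 u0_def using sq by (simp add: algebra_simps power2_eq_square)
    then have "norm u0 = r" using rpos by (simp add: power2_eq_iff_nonneg)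
    then have nu: "norm u = 1" using rpos by (simp add: u_def)
    have key: "qmult (qmult u0 qi) (qconj u0) = r^2 *\<^sub>R b"
    proof -
      have e: "(b$2)^2 = 1 - (b$3)^2 - (b$4)^2" using sq by simp
      show ?thesis unfolding r2 u0_def quat_eq_iff using b1
        by (simp add: algebra_simps power2_eq_square e[unfolded power2_eq_square])
    qed
    have "qmult (qmult u qi) (qconj u) = (1/r^2) *\<^sub>R qmult (qmult u0 qi) (qconj u0)"
      by (simp add: u_def power2_eq_square del: qmult_nth qconj_nth)
    also have "\<dots> = b" using key rpos by simp
    finally show ?thesis using that nu by blast
  qed
qed

lemma perp2:
  fixes c3 c4 d3 d4 :: real
  assumes "c3^2 + c4^2 = 1" "d3^2 + d4^2 = 1" "c3*d3 + c4*d4 = 0"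
  shows "(d3 = - c4 \<and> d4 = c3) \<or> (d3 = c4 \<and> d4 = - c3)"
proof -
  define l where "l = d4*c3 - d3*c4"
  have h1: "c3*d3 = -(c4*d4)" and h2: "c4*d4 = -(c3*d3)" using assms(3) by (simp_all add: eq_neg_iff_add_eq_0 add.commute)
  have a: "d3 = - c4 * l"
  proof -
    have "d3 = d3 * (c3^2 + c4^2)" using assms by simp
    also have "\<dots> = c3 * (c3*d3) + d3*c4^2" by (simp add: algebra_simps power2_eq_square)
    also have "\<dots> = c3 * (- c4*d4) + d3*c4^2" using h1 by simp
    finally show ?thesis by (simp add: l_def algebra_simps power2_eq_square)
  qed
  have b: "d4 = c3 * l"
  proof -
    have "d4 = d4 * (c3^2 + c4^2)" using assms by simp
    also have "\<dots> = d4*c3^2 + c4 * (c4*d4)" by (simp add: algebra_simps power2_eq_square)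
    also have "\<dots> = d4*c3^2 + c4 * (- c3*d3)" using h2 by simp
    finally show ?thesis by (simp add: l_def algebra_simps power2_eq_square)
  qed
  have "l^2 = 1"
  proof -
    have "1 = d3^2 + d4^2" using assms by simp
    also have "\<dots> = l^2 * (c3^2 + c4^2)" by (simp add: a b algebra_simps power2_eq_square)
    finally show ?thesis using assms by simp
  qed
  then have "l = 1 \<or> l = -1" by (simp add: power2_eq_1_iff)
  then show ?thesis using a b by auto
qed

definition qrot :: "real \<Rightarrow> quat" where
  "qrot t = qmk (cos (t/2)) (sin (t/2)) 0 0"

lemma qrot_norm [simp]: "norm (qrot t) = 1"
  by (simp add: qrot_def qnorm_eq)

lemma qrot_act:
  "qmult (qmult (qrot t) q1) (qconj (qrot t)) = q1"
  "qmult (qmult (qrot t) qi) (qconj (qrot t)) = qi"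
  "qmult (qmult (qrot t) qj) (qconj (qrot t)) = qmk 0 0 (cos t) (sin t)"
  "qmult (qmult (qrot t) qk) (qconj (qrot t)) = qmk 0 0 (- sin t) (cos t)"
proof -
  have c: "cos t = cos (t/2) * cos (t/2) - sin (t/2) * sin (t/2)"
    using cos_add[of "t/2" "t/2"] by simp
  have s: "sin t = 2 * (sin (t/2) * cos (t/2))"
    using sin_add[of "t/2" "t/2"] by simp
  have p: "cos (t/2) * cos (t/2) + sin (t/2) * sin (t/2) = 1"
    using sin_cos_squared_add3[of "t/2"] by (simp add: algebra_simps)
  show "qmult (qmult (qrot t) q1) (qconj (qrot t)) = q1"
    by simp
  show "qmult (qmult (qrot t) qi) (qconj (qrot t)) = qi"
    using p by (simp add: qrot_def quat_eq_iff algebra_simps)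
  show "qmult (qmult (qrot t) qj) (qconj (qrot t)) = qmk 0 0 (cos t) (sin t)"
    using p by (simp add: qrot_def quat_eq_iff c s algebra_simps)
  show "qmult (qmult (qrot t) qk) (qconj (qrot t)) = qmk 0 0 (- sin t) (cos t)"
    using p by (simp add: qrot_def quat_eq_iff c s algebra_simps)
qed

lemma basis_quat: "b \<in> (Basis :: quat set) \<Longrightarrow> b = q1 \<or> b = qi \<or> b = qj \<or> b = qk"
proof -
  assume "b \<in> Basis"
  then obtain i where b: "b = axis i 1" by (auto simp: Basis_vec_def)
  show ?thesis using exhaust_4[of i] unfolding b by (auto simp: quat_eq_iff axis_def)
qed

lemma inner_one_norm: "(x::quat) \<bullet> x = 1 \<Longrightarrow> norm x = 1"
  by (simp add: norm_eq_sqrt_inner)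

definition qD :: "quat \<Rightarrow> quat" where
  "qD x = qmk (x$1) (x$2) (x$3) (- x$4)"

lemma linear_qD: "linear qD"
  by (rule linearI) (simp_all add: qD_def quat_eq_iff)

definition Dm :: "real^4^4" where
  "Dm = (\<chi> i j. if i = j then (if i = 4 then -1 else 1) else 0)"

lemma Dm_apply: "Dm *v x = qD x"
  by (simp add: Dm_def qD_def quat_eq_iff matrix_vector_mult_def sum_4)

lemma det_Dm: "det Dm = -1"
proof -
  have "det Dm = prod (\<lambda>i. Dm$i$i) (UNIV::4 set)" by (rule det_diagonal) (simp add: Dm_def)
  also have "\<dots> = -1" unfolding UNIV_4 by (simp add: Dm_def)
  finally show ?thesis .
qed

lemma pmap_surj: assumes "A \<in> SO4" shows "\<exists>c \<in> Sp1 \<times> Sp1. pmap c = A"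
proof -
  have orth: "orthogonal_matrix A" "det A = 1" using assms by (auto simp: SO4_def rotation_matrix_def)
  have ot: "orthogonal_transformation (\<lambda>x. A *v x)"
    using orth(1) by (simp add: orthogonal_transformation_matrix)
  have fin: "(A *v x) \<bullet> (A *v y) = x \<bullet> y" for x y
    using ot by (simp add: orthogonal_transformation_def)
  define q where "q = A *v q1"
  have nq: "norm q = 1" using fin[of q1 q1] by (intro inner_one_norm) (simp add: q_def quat_inner)
  define f1 where "f1 x = qmult (qconj q) (A *v x)" for x
  have f1in: "f1 x \<bullet> f1 y = x \<bullet> y" for x y using nq by (simp add: f1_def qinner_mult_left fin)
  have f11: "f1 q1 = q1" using nq by (simp add: f1_def q_def[symmetric])
  define b where "b = f1 qi"
  have b1: "b$1 = 0" using f1in[of qi q1] f11 by (simp add: b_def quat_inner)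
  have nb: "norm b = 1" using f1in[of qi qi] by (intro inner_one_norm) (simp add: b_def quat_inner)
  obtain u where nu: "norm u = 1" and ub: "qmult (qmult u qi) (qconj u) = b"
    using rot_i[OF b1 nb] by blast
  define f2 where "f2 x = qmult (qconj u) (qmult (f1 x) u)" for x
  have f2in: "f2 x \<bullet> f2 y = x \<bullet> y" for x y
    using nu by (simp add: f2_def qinner_mult_left qinner_mult_right f1in)
  have f21: "f2 q1 = q1" using nu by (simp add: f2_def f11)
  have f2i: "f2 qi = qi" using nu by (simp add: f2_def b_def[symmetric] ub[symmetric] qmult_assoc)
  define c where "c = f2 qj"
  define d where "d = f2 qk"
  have c12: "c$1 = 0" "c$2 = 0" using f2in[of qj q1] f2in[of qj qi] f21 f2i by (simp_all add: c_def quat_inner)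
  have d12: "d$1 = 0" "d$2 = 0" using f2in[of qk q1] f2in[of qk qi] f21 f2i by (simp_all add: d_def quat_inner)
  have c34: "(c$3)^2 + (c$4)^2 = 1" using f2in[of qj qj] c12 by (simp add: c_def[symmetric] quat_inner power2_eq_square)
  have d34: "(d$3)^2 + (d$4)^2 = 1" using f2in[of qk qk] d12 by (simp add: d_def[symmetric] quat_inner power2_eq_square)
  have cd: "c$3 * d$3 + c$4 * d$4 = 0" using f2in[of qj qk] c12 d12 by (simp add: c_def[symmetric] d_def[symmetric] quat_inner)
  obtain t where t: "c$3 = cos t" "c$4 = sin t" using sincos_total_2pi_le[OF c34] by blast
  define w where "w = qrot t"
  have nw: "norm w = 1" by (simp add: w_def)
  define G where "G = qmult q (qmult u w)"
  define H where "H = qconj (qmult u w)"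
  have nG: "norm (qconj G) = 1" "norm H = 1" using nq nu nw by (simp_all add: G_def H_def qnorm_mult)
  have gen: "A *v e = qact (qconj G) H y" if "f2 e = qmult (qmult w y) (qconj w)" for e y
  proof -
    have "qmult q (qmult u (qmult (f2 e) (qconj u))) = A *v e"
      using nq nu by (simp add: f2_def f1_def qmult_assoc)
    then show ?thesis using that by (simp add: qact_def G_def H_def qconj_qmult qmult_assoc)
  qed
  have cq: "c = qmk 0 0 (cos t) (sin t)" using c12 t by (simp add: quat_eq_iff)
  consider "d$3 = - sin t \<and> d$4 = cos t" | "d$3 = sin t \<and> d$4 = - cos t"
    using perp2[OF c34 d34 cd] t by auto
  then show ?thesis
  proof cases
    case 1
    then have dq: "d = qmk 0 0 (- sin t) (cos t)" using d12 by (simp add: quat_eq_iff)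
    have "(\<lambda>x. A *v x) = qact (qconj G) H"
    proof (rule linear_eq_stdbasis)
      show "linear (\<lambda>x. A *v x)" by simp
      show "linear (qact (qconj G) H)" by (rule linear_qact)
      fix e :: quat assume "e \<in> Basis"
      then consider "e = q1" | "e = qi" | "e = qj" | "e = qk" using basis_quat by blast
      then show "A *v e = qact (qconj G) H e"
        by cases (auto intro!: gen simp: w_def qrot_act f21 f2i c_def[symmetric] d_def[symmetric] cq dq)
    qed
    then have "A = pmap (qconj G, H)" using nG by (simp add: matrix_eq pmap_apply fun_eq_iff)
    moreover have "(qconj G, H) \<in> Sp1 \<times> Sp1" using nG by (simp add: Sp1_def)
    ultimately show ?thesis by blast
  next
    case 2
    then have dq: "d = - qmk 0 0 (- sin t) (cos t)" using d12 by (simp add: quat_eq_iff)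
    have "(\<lambda>x. A *v x) = (\<lambda>x. qact (qconj G) H (qD x))"
    proof (rule linear_eq_stdbasis)
      show "linear (\<lambda>x. A *v x)" by simp
      show "linear (\<lambda>x. qact (qconj G) H (qD x))"
        using linear_compose[OF linear_qD linear_qact] by (simp add: o_def)
      fix e :: quat assume "e \<in> Basis"
      then consider "e = q1" | "e = qi" | "e = qj" | "e = qk" using basis_quat by blast
      then show "A *v e = qact (qconj G) H (qD e)"
      proof cases
        case 4
        have "qD e = - qk" by (simp add: 4 qD_def quat_eq_iff)
        then show ?thesis using 4
          by (auto intro!: gen simp: w_def qrot_act d_def[symmetric] dq)
      qed (auto intro!: gen simp: qD_def w_def qrot_act f21 f2i c_def[symmetric] cq)
    qed
    then have "A = pmap (qconj G, H) ** Dm"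
      using nG by (simp add: matrix_eq pmap_apply fun_eq_iff matrix_vector_mul_assoc[symmetric] Dm_apply)
    then have "det A = -1" using nG by (simp add: det_mul det_pmap det_Dm)
    then show ?thesis using orth by simp
  qed
qed

lemma pmap_neg: "pmap (- c) = pmap c"
  by (cases c) (simp add: pmap_def qinv_def del: qmult_nth qconj_nth)

lemma pmap_SO4': "c \<in> Sp1 \<times> Sp1 \<Longrightarrow> pmap c \<in> SO4"
  by (cases c) (auto simp: Sp1_def pmap_SO4)

lemma C_neg: "c \<in> Sp1 \<times> Sp1 \<Longrightarrow> - c \<in> Sp1 \<times> Sp1"
  by (cases c) (auto simp: Sp1_def)

lemma pmap_fiber': "c \<in> Sp1 \<times> Sp1 \<Longrightarrow> d \<in> Sp1 \<times> Sp1 \<Longrightarrow> pmap d = pmap c \<Longrightarrow> d = c \<or> d = - c"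
  using pmap_fiber[of "fst c" "snd c" "fst d" "snd d"] by (cases c, cases d) auto

lemma norm_C: "c \<in> Sp1 \<times> Sp1 \<Longrightarrow> norm c = sqrt 2"
  by (cases c) (simp add: Sp1_def norm_Pair)

lemma far_neg: "c \<in> Sp1 \<times> Sp1 \<Longrightarrow> dist c (- c) = 2 * sqrt 2"
proof -
  assume c: "c \<in> Sp1 \<times> Sp1"
  have "dist c (- c) = norm (2 *\<^sub>R c)" by (simp add: dist_norm scaleR_2)
  also have "\<dots> = 2 * sqrt 2" using norm_C[OF c] by simp
  finally show ?thesis .
qed

lemma pmap_open_map:
  assumes U: "openin (top_of_set (Sp1 \<times> Sp1)) U"
  shows "openin (top_of_set SO4) (pmap ` U)"
proof -
  let ?C = "Sp1 \<times> Sp1"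
  have UC: "U \<subseteq> ?C" using openin_subset[OF U] by simp
  let ?N = "?C \<inter> uminus -` U"
  have N: "openin (top_of_set ?C) ?N"
  proof -
    obtain O' where "open O'" "U = ?C \<inter> O'" using U by (auto simp: openin_open)
    then have "?N = ?C \<inter> uminus -` O'" using C_neg by (auto dest: C_neg)
    moreover have "openin (top_of_set ?C) (?C \<inter> uminus -` O')"
      by (rule continuous_openin_preimage_gen) (auto intro: continuous_intros \<open>open O'\<close>)
    ultimately show ?thesis by simp
  qed
  define K where "K = ?C - (U \<union> ?N)"
  have "closedin (top_of_set ?C) K"
    unfolding K_def using U N by (intro closedin_diff) auto
  then have "compact K" using closedin_compact compact_C by blast
  have "K \<subseteq> ?C" by (auto simp: K_def)
  then have cK: "compact (pmap ` K)"
    using compact_continuous_image[OF continuous_on_subset[OF continuous_pmap] \<open>compact K\<close>] by blast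
  have eq: "pmap ` U = SO4 - (SO4 \<inter> pmap ` K)"
  proof
    show "pmap ` U \<subseteq> SO4 - (SO4 \<inter> pmap ` K)"
    proof
      fix A assume "A \<in> pmap ` U"
      then obtain c where c: "c \<in> U" "A = pmap c" by auto
      have "A \<in> SO4" using c UC pmap_SO4' by auto
      moreover have "A \<notin> pmap ` K"
      proof
        assume "A \<in> pmap ` K"
        then obtain k where k: "k \<in> K" "pmap k = A" by auto
        then have "k = c \<or> k = - c" using pmap_fiber'[of c k] c UC by (auto simp: K_def)
        then show False using k c by (auto simp: K_def)
      qed
      ultimately show "A \<in> SO4 - (SO4 \<inter> pmap ` K)" by auto
    qed
  next
    show "SO4 - (SO4 \<inter> pmap ` K) \<subseteq> pmap ` U"
    proof
      fix A assume A: "A \<in> SO4 - (SO4 \<inter> pmap ` K)"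
      then obtain c where c: "c \<in> ?C" "pmap c = A" using pmap_surj by blast
      then have "c \<notin> K" using A by auto
      then have "c \<in> U \<or> - c \<in> U" using c by (auto simp: K_def)
      then show "A \<in> pmap ` U" using c pmap_neg[of c] by (metis image_eqI)
    qed
  qed
  show ?thesis unfolding eq
    by (intro openin_diff openin_subtopology_self closedin_closed_Int compact_imp_closed cK)
qed

lemma covering_pmap: "covering_space (Sp1 \<times> Sp1) pmap SO4"
proof (rule covering_spaceI)
  let ?C = "Sp1 \<times> Sp1"
  show "continuous_on ?C pmap" by (rule continuous_pmap)
  show "pmap ` ?C = SO4" using pmap_surj pmap_SO4' by blast
  fix A assume "A \<in> SO4"
  then obtain c where c: "c \<in> ?C" "pmap c = A" using pmap_surj by blast
  define V where "V = ?C \<inter> ball c 1"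
  define V' where "V' = ?C \<inter> ball (- c) 1"
  define T where "T = pmap ` V"
  have oV: "openin (top_of_set ?C) V" "openin (top_of_set ?C) V'"
    unfolding V_def V'_def by (auto intro: openin_open_Int)
  have far: "x \<in> ?C \<Longrightarrow> dist x c < 1 \<Longrightarrow> dist (- x) c < 1 \<Longrightarrow> False" for x
  proof -
    assume x: "x \<in> ?C" "dist x c < 1" "dist (- x) c < 1"
    have "dist x (- x) \<le> dist x c + dist (- x) c" by (simp add: dist_triangle2)
    also have "\<dots> < 2" using x by simp
    finally have "2 * sqrt 2 < 2" using far_neg[OF x(1)] by simp
    moreover have "1 \<le> sqrt 2" by simp
    ultimately show False by simp
  qed
  have negV: "- x \<in> V \<longleftrightarrow> x \<in> V'" for x
  proof -
    have "dist c (- x) = dist (- c) x" by (metis dist_minus minus_minus)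
    then show ?thesis using C_neg[of x] C_neg[of "- x"] by (auto simp: V_def V'_def)
  qed
  have farV: "x \<in> V \<Longrightarrow> - x \<in> V \<Longrightarrow> False" for x
    using far[of x] by (auto simp: V_def dist_commute)
  have V'eq: "V' = uminus ` V"
  proof
    show "V' \<subseteq> uminus ` V" using negV by (metis image_eqI minus_minus subsetI)
    show "uminus ` V \<subseteq> V'" using negV by (metis image_subset_iff minus_minus)
  qed
  have VV': "V \<inter> V' = {}" using negV farV by auto
  have "openin (top_of_set SO4) T" unfolding T_def using pmap_open_map oV by blast
  moreover have "A \<in> T" using c by (auto simp: T_def V_def)
  moreover have hom: "\<exists>q. homeomorphism W T pmap q" if W: "W = V \<or> W = V'" for W
  proof -
    have oW: "openin (top_of_set ?C) W" using W oV by auto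
    have WC: "W \<subseteq> ?C" using W by (auto simp: V_def V'_def)
    have imW: "pmap ` W = T"
    proof (cases "W = V")
      case True then show ?thesis by (simp add: T_def)
    next
      case False
      then have "W = V'" using W by auto
      then show ?thesis unfolding T_def
        by (simp add: V'eq image_image pmap_neg)
    qed
    have injW: "inj_on pmap W"
    proof
      fix x y assume xy: "x \<in> W" "y \<in> W" "pmap x = pmap y"
      then have "y = x \<or> y = - x" using pmap_fiber'[of x y] WC by auto
      moreover have "y \<noteq> - x"
      proof
        assume "y = - x"
        then show False using W xy far negV[of x] negV[of y]
          using negV[of x] negV[of y] farV[of x] farV[of y] by auto
      qed
      ultimately show "x = y" by auto
    qed
    show ?thesis
    proof (rule homeomorphism_injective_open_map[OF _ imW injW])
      show "continuous_on W pmap" using continuous_pmap WC by (rule continuous_on_subset)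
      fix U assume "openin (top_of_set W) U"
      then have "openin (top_of_set ?C) U" using oW openin_trans by blast
      then have "openin (top_of_set SO4) (pmap ` U)" by (rule pmap_open_map)
      moreover have "pmap ` U \<subseteq> T" using \<open>openin (top_of_set W) U\<close> imW openin_subset by force
      moreover have "T \<subseteq> SO4" using pmap_SO4' by (auto simp: T_def V_def)
      ultimately show "openin (top_of_set T) (pmap ` U)" by (rule openin_subset_trans)
    qed (auto intro: exI)
  qed
  moreover have "\<Union>{V, V'} = ?C \<inter> pmap -` T"
  proof
    show "\<Union>{V, V'} \<subseteq> ?C \<inter> pmap -` T"
    proof
      fix x assume "x \<in> \<Union>{V, V'}"
      then consider "x \<in> V" | "x \<in> V'" by auto
      then show "x \<in> ?C \<inter> pmap -` T"
      proof cases
        case 1 then show ?thesis by (auto simp: T_def V_def)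
      next
        case 2
        then have "- x \<in> V" "x \<in> ?C" using negV by (auto simp: V'_def)
        then show ?thesis unfolding T_def by (metis IntI image_eqI pmap_neg vimageI)
      qed
    qed
    show "?C \<inter> pmap -` T \<subseteq> \<Union>{V, V'}"
    proof
      fix x assume x: "x \<in> ?C \<inter> pmap -` T"
      then obtain y where y: "y \<in> V" "pmap x = pmap y" by (auto simp: T_def)
      then have "x = y \<or> x = - y" using pmap_fiber'[of y x] x by (auto simp: V_def)
      then show "x \<in> \<Union>{V, V'}" using y negV[of x] by auto
    qed
  qed
  moreover have "pairwise disjnt {V, V'}"
    unfolding pairwise_def disjnt_def
    using VV' by auto
  ultimately show "\<exists>T. A \<in> T \<and> openin (top_of_set SO4) T \<and>
           (\<exists>v. \<Union>v = ?C \<inter> pmap -` T \<and> (\<forall>u\<in>v. openin (top_of_set ?C) u) \<and>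
                pairwise disjnt v \<and> (\<forall>u\<in>v. \<exists>q. homeomorphism u T pmap q))"
    using oV by (intro exI[of _ T] conjI exI[of _ "{V, V'}"]) auto
qed

lemma cos_per: "cos (of_int n * (k + 2*pi)) = cos (of_int n * k)"
proof -
  have "of_int n * (k + 2*pi) = of_int n * k + (2*pi) * of_int n" by (simp add: algebra_simps)
  then show ?thesis by (simp add: cos_add)
qed

lemma sin_per: "sin (of_int n * (k + 2*pi)) = sin (of_int n * k)"
proof -
  have "of_int n * (k + 2*pi) = of_int n * k + (2*pi) * of_int n" by (simp add: algebra_simps)
  then show ?thesis by (simp add: sin_add)
qed

lemma qconj_q1 [simp]: "qconj q1 = q1"
  by (simp add: quat_eq_iff)

lemma norm_qmk: "norm (qmk a b c d) = 1 \<longleftrightarrow> a^2 + b^2 + c^2 + d^2 = 1"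
  by (simp add: qnorm_eq)

lemma Wn_lift_C: "Wn_lift n k \<in> Sp1 \<times> Sp1"
  by (simp add: Wn_lift_def Sp1_def norm_qmk)

lemma Wn_eq: "Wn n k = pmap (Wn_lift n k)"
  using Wn_lift_C[of n k]
  by (simp add: Wn_def Wn_lift_def Sp1_def pmap_unit Let_def vec_eq_iff forall_4 matrix_def qact_def axis_def)

lemma cont_Wn_lift: "continuous_on UNIV (Wn_lift n)"
  unfolding Wn_lift_def by (intro continuous_intros)

lemma cont_pmap_comp:
  assumes "continuous_on S f" "\<And>x. x \<in> S \<Longrightarrow> f x \<in> Sp1 \<times> Sp1"
  shows "continuous_on S (\<lambda>x. pmap (f x))"
proof -
  have "f ` S \<subseteq> Sp1 \<times> Sp1" using assms(2) by (intro image_subsetI)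
  then show ?thesis by (rule continuous_on_compose2[OF continuous_pmap assms(1)])
qed

lemma cont_Wn: "continuous_on UNIV (Wn n)"
  unfolding Wn_eq[abs_def] by (rule cont_pmap_comp[OF cont_Wn_lift Wn_lift_C])

lemma sym_conj:
  assumes "norm g = 1" "norm h = 1"
  shows "wmat ** pmap (g, h) ** matrix_inv wmat = pmap (g, qmult (qconj qj) (qmult h qj))"
  using assms by (simp add: wmat_pmap matrix_inv_pmap pmap_mult qnorm_mult)

lemma sym_crit:
  assumes "norm g = 1" "norm g' = 1" "qconj g' = g"
  shows "wmat ** pmap (g, q1) ** matrix_inv wmat = matrix_inv (pmap (g', q1))"
  using assms by (simp add: sym_conj matrix_inv_pmap qmult_conj_left)

lemma symmetric_Wn: "symmetric_loop (Wn n)"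
  unfolding symmetric_loop_def
proof (intro conjI allI)
  show "continuous_on UNIV (Wn n)" by (rule cont_Wn)
  fix k
  show "Wn n k \<in> SO4" unfolding Wn_eq using Wn_lift_C pmap_SO4' by blast
  show "Wn n (k + 2 * pi) = Wn n k" by (simp add: Wn_def cos_per sin_per)
  show "wmat ** Wn n k ** matrix_inv wmat = matrix_inv (Wn n (- k))"
    unfolding Wn_eq Wn_lift_def
    by (rule sym_crit) (simp_all add: norm_qmk quat_eq_iff)
qed

definition g2 :: "int \<Rightarrow> real \<times> real \<Rightarrow> quat" where
  "g2 n p = (let c = cos (pi / 2 * snd p); s = sin (pi / 2 * snd p);
               C = cos (of_int n * fst p); S = sin (of_int n * fst p)
           in qmk (c^2*C + s^2) (c^2*S) (s*c*(1-C)) (-(s*c*S)))"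

lemma norm_g2: "norm (g2 n p) = 1"
proof -
  define c where "c = cos (pi / 2 * snd p)"
  define s where "s = sin (pi / 2 * snd p)"
  define C where "C = cos (of_int n * fst p)"
  define S where "S = sin (of_int n * fst p)"
  have cs: "c^2 + s^2 = 1" "C^2 + S^2 = 1" by (simp_all add: c_def s_def C_def S_def)
  have "(c^2*C + s^2)^2 + (c^2*S)^2 + (s*c*(1-C))^2 + (-(s*c*S))^2 = (c^2+s^2)^2"
    using cs(2) by algebra
  then show ?thesis using cs(1)
    unfolding g2_def Let_def norm_qmk c_def[symmetric] s_def[symmetric] C_def[symmetric] S_def[symmetric]
    by simp
qed

lemma cont_g2: "continuous_on S (g2 n)"
  unfolding g2_def Let_def by (rule continuous_on_qmk; intro continuous_intros)

lemma loop_hom_Wn: "loop_homotopic_SO4 (Wn n) (\<lambda>k. mat 1)"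
  unfolding loop_homotopic_SO4_def
proof (intro exI[of _ "\<lambda>p. pmap (g2 n p, q1)"] conjI ballI allI impI)
  show "continuous_on (UNIV \<times> {0..1}) (\<lambda>p. pmap (g2 n p, q1))"
    by (rule cont_pmap_comp) (auto intro!: continuous_intros cont_g2 simp: Sp1_def norm_g2)
  fix p :: "real \<times> real"
  show "pmap (g2 n p, q1) \<in> SO4" by (rule pmap_SO4) (simp_all add: norm_g2)
next
  fix k t :: real
  show "pmap (g2 n (k + 2 * pi, t), q1) = pmap (g2 n (k, t), q1)"
    by (simp add: g2_def cos_per sin_per)
next
  fix k :: real
  show "pmap (g2 n (k, 0), q1) = Wn n k"
    by (simp add: Wn_eq Wn_lift_def g2_def)
  show "pmap (g2 n (k, 1), q1) = mat 1"
    by (simp add: g2_def pmap_11)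
qed

lemma is_lift_Wn: "is_lift (Wn_lift n) (Wn n)"
  by (simp add: is_lift_def cont_Wn_lift Wn_lift_C Wn_eq)

lemma lift_unique:
  assumes "is_lift L W" "is_lift L' W" "L a = L' a"
  shows "L = L'"
proof
  fix k
  have L: "continuous_on UNIV L" "\<And>k. L k \<in> Sp1 \<times> Sp1" "\<And>k. pmap (L k) = W k"
    using assms(1) by (auto simp: is_lift_def)
  have L': "continuous_on UNIV L'" "\<And>k. L' k \<in> Sp1 \<times> Sp1" "\<And>k. pmap (L' k) = W k"
    using assms(2) by (auto simp: is_lift_def)
  have Weq: "W = (\<lambda>k. pmap (L k))" using L(3) by auto
  have cW: "continuous_on UNIV W" unfolding Weq by (rule cont_pmap_comp[OF L(1) L(2)])
  have WS: "W \<in> UNIV \<rightarrow> SO4" using L(2) pmap_SO4' unfolding Weq by auto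
  show "L k = L' k"
    by (rule covering_space_lift_unique[OF covering_pmap assms(3) cW WS L(1) _ _ L'(1)]) (use L L' in auto)
qed

lemma Wn_lift_0: "Wn_lift n 0 = (q1, q1)"
  by (simp add: Wn_lift_def)

lemma Wn_lift_pi: "Wn_lift n pi = (qmk ((-1) ^ nat \<bar>n\<bar>) 0 0 0, q1)"
proof -
  have "cos (of_int n * pi) = (-1) ^ nat \<bar>n\<bar>"
    using cos_npi_int[of n] by (simp add: mult.commute even_nat_iff)
  moreover have "sin (of_int n * pi) = 0" using sin_npi_int[of n] by (simp add: mult.commute)
  ultimately show ?thesis by (simp add: Wn_lift_def)
qed

lemma is_lift_neg: "is_lift L W \<Longrightarrow> is_lift (\<lambda>k. - L k) W"
  by (auto simp: is_lift_def C_neg pmap_neg intro: continuous_intros)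

lemma lift_pm:
  assumes "is_lift L W" "is_lift L' W"
  shows "L = L' \<or> L = (\<lambda>k. - L' k)"
proof -
  have a: "L 0 \<in> Sp1 \<times> Sp1" using assms(1) by (simp add: is_lift_def)
  have b: "L' 0 \<in> Sp1 \<times> Sp1" using assms(2) by (simp add: is_lift_def)
  have e: "pmap (L 0) = pmap (L' 0)" using assms by (simp add: is_lift_def)
  have "L 0 = L' 0 \<or> L 0 = - L' 0" by (rule pmap_fiber'[OF b a e])
  then show ?thesis
  proof
    assume "L 0 = L' 0"
    then have "L = L'" by (rule lift_unique[OF assms])
    then show ?thesis ..
  next
    assume "L 0 = - L' 0"
    then have "L = (\<lambda>k. - L' k)" by (rule lift_unique[OF assms(1) is_lift_neg[OF assms(2)]])
    then show ?thesis ..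
  qed
qed

lemma lift_unique_Wn:
  assumes "is_lift L (Wn n)" "L 0 = (q1, q1)" shows "L = Wn_lift n"
proof -
  have "L 0 = Wn_lift n 0" using assms(2) by (simp add: Wn_lift_0)
  then show ?thesis by (rule lift_unique[OF assms(1) is_lift_Wn])
qed

definition g1 :: "int \<Rightarrow> real \<times> real \<Rightarrow> quat" where
  "g1 m p = (let c = cos (pi / 2 * snd p); s = sin (pi / 2 * snd p);
               C = cos (2 * of_int m * fst p); S = sin (2 * of_int m * fst p);
               Sm = sin (of_int m * fst p)
           in qmk (c^2*C + s^2) (c^2*S) 0 (- (2 * s * c * Sm)))"

lemma norm_g1: "norm (g1 m p) = 1"
proof -
  define c where "c = cos (pi / 2 * snd p)"
  define s where "s = sin (pi / 2 * snd p)"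
  define C where "C = cos (2 * of_int m * fst p)"
  define S where "S = sin (2 * of_int m * fst p)"
  define Sm where "Sm = sin (of_int m * fst p)"
  have cs: "c^2 + s^2 = 1" "C^2 + S^2 = 1" by (simp_all add: c_def s_def C_def S_def)
  have CS: "C = 1 - 2 * Sm^2" unfolding C_def Sm_def using cos_double_sin[of "of_int m * fst p"]
    by (simp add: mult.assoc)
  have "(c^2*C + s^2)^2 + (c^2*S)^2 + 0^2 + (- (2 * s * c * Sm))^2
        = (c^2)^2*(C^2+S^2) + (s^2)^2 + 2 * c^2 * s^2 * (C + 2 * Sm^2)"
    by (simp add: power2_eq_square algebra_simps)
  also have "\<dots> = (c^2+s^2)^2" by (simp only: cs(2)) (simp add: CS algebra_simps power2_eq_square)
  finally have "(c^2*C + s^2)^2 + (c^2*S)^2 + 0^2 + (- (2 * s * c * Sm))^2 = (c^2+s^2)^2" .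
  then show ?thesis using cs(1)
    unfolding g1_def Let_def norm_qmk c_def[symmetric] s_def[symmetric] C_def[symmetric]
      S_def[symmetric] Sm_def[symmetric]
    by simp
qed

lemma cont_g1: "continuous_on S (g1 m)"
  unfolding g1_def Let_def by (intro continuous_intros)

lemma cont_g1_t: "continuous_on S (\<lambda>k. g1 m (k, t))"
  unfolding g1_def Let_def by (intro continuous_intros)

lemma g1_sym: "qconj (g1 m (- k, t)) = g1 m (k, t)"
  by (simp add: g1_def Let_def quat_eq_iff)

lemma even_hom:
  assumes "even n"
  shows "\<exists>H. symmetric_homotopy H \<and> (\<forall>k. H (k, 0) = Wn n k) \<and> (\<forall>k. H (k, 1) = mat 1)"
proof -
  obtain m where n: "n = 2 * m" using assms by (auto elim: evenE)
  define H where "H p = pmap (g1 m p, q1)" for p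
  have HC: "(g1 m p, q1) \<in> Sp1 \<times> Sp1" for p by (simp add: Sp1_def norm_g1)
  have "symmetric_homotopy H"
    unfolding symmetric_homotopy_def
  proof (intro conjI ballI)
    show "continuous_on (UNIV \<times> {0..1}) H"
      unfolding H_def by (rule cont_pmap_comp[OF _ HC]) (intro continuous_intros cont_g1)
    fix t :: real
    show "symmetric_loop (\<lambda>k. H (k, t))"
      unfolding symmetric_loop_def
    proof (intro conjI allI)
      show "continuous_on UNIV (\<lambda>k. H (k, t))"
        unfolding H_def by (rule cont_pmap_comp[OF _ HC]) (intro continuous_intros cont_g1_t)
      fix k
      show "H (k, t) \<in> SO4" unfolding H_def by (rule pmap_SO4) (simp_all add: norm_g1)
      have "2 * of_int m * (k + 2 * pi) = of_int (2*m) * (k + 2*pi)" by simp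
      then show "H (k + 2 * pi, t) = H (k, t)"
        unfolding H_def g1_def Let_def fst_conv snd_conv
        using cos_per[of "2*m" k] sin_per[of "2*m" k] sin_per[of m k] by simp
      show "wmat ** H (k, t) ** matrix_inv wmat = matrix_inv (H (- k, t))"
        unfolding H_def by (rule sym_crit) (simp_all add: norm_g1 g1_sym)
    qed
  qed
  moreover have "H (k, 0) = Wn n k" for k
    by (simp add: H_def g1_def Wn_eq Wn_lift_def n)
  moreover have "H (k, 1) = mat 1" for k
    by (simp add: H_def g1_def pmap_11)
  ultimately show ?thesis by blast
qed

lemma sym_fst:
  assumes W: "symmetric_loop W" and LC: "\<And>k. L k \<in> Sp1 \<times> Sp1" and pL: "\<And>k. pmap (L k) = W k"
  shows "fst (L k) = qconj (fst (L (- k))) \<or> fst (L k) = - qconj (fst (L (- k)))"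
proof -
  obtain g h where Lk: "L k = (g,h)" by (cases "L k")
  obtain g' h' where Lk': "L (-k) = (g',h')" by (cases "L (-k)")
  have n: "norm g = 1" "norm h = 1" "norm g' = 1" "norm h' = 1"
    using LC[of k] LC[of "-k"] Lk Lk' by (auto simp: Sp1_def)
  have "wmat ** W k ** matrix_inv wmat = matrix_inv (W (-k))" using W by (simp add: symmetric_loop_def)
  then have "wmat ** pmap (g,h) ** matrix_inv wmat = matrix_inv (pmap (g', h'))"
    using pL[of k] pL[of "-k"] Lk Lk' by simp
  then have e: "pmap (qconj g', qconj h') = pmap (g, qmult (qconj qj) (qmult h qj))"
    using n by (simp add: sym_conj matrix_inv_pmap)
  have "(qconj g', qconj h') = (g, qmult (qconj qj) (qmult h qj)) \<or>
        (qconj g', qconj h') = - (g, qmult (qconj qj) (qmult h qj))"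
    by (rule pmap_fiber) (use n e in \<open>simp_all add: Sp1_def qnorm_mult\<close>)
  then have "g = qconj g' \<or> g = - qconj g'" by auto
  then show ?thesis using Lk Lk' by simp
qed

lemma re_vals:
  assumes "norm a = 1" "a = qconj a \<or> a = - qconj a"
  shows "a$1 = -1 \<or> a$1 = 0 \<or> a$1 = 1"
  using assms(2)
proof
  assume "a = qconj a"
  then have "a$2 = (qconj a)$2" "a$3 = (qconj a)$3" "a$4 = (qconj a)$4" by (rule arg_cong)+
  then have "a$2 = 0" "a$3 = 0" "a$4 = 0" by simp_all
  then have "(a$1)^2 = 1" using assms(1) quat_norm2[of a] by simp
  then show ?thesis by (auto simp: power2_eq_1_iff)
next
  assume "a = - qconj a"
  then have "a$1 = (- qconj a)$1" by (rule arg_cong)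
  then have "a$1 = - a$1" by simp
  then show ?thesis by simp
qed

lemma sym_hom_even:
  assumes H: "symmetric_homotopy H" and H0: "\<And>k. H (k,0) = Wn n k" and H1: "\<And>k. H (k,1) = mat 1"
  shows "even n"
proof -
  let ?U = "(UNIV::real set) \<times> {0..1::real}"
  have cH: "continuous_on ?U H" using H by (simp add: symmetric_homotopy_def)
  have SL: "symmetric_loop (\<lambda>k. H (k,t))" if "t \<in> {0..1}" for t
    using H that by (simp add: symmetric_homotopy_def)
  have HS: "H \<in> ?U \<rightarrow> SO4"
  proof
    fix p assume "p \<in> ?U"
    then obtain k t where p: "p = (k,t)" "t \<in> {0..1}" by auto
    show "H p \<in> SO4" using SL[OF p(2)] p(1) by (simp add: symmetric_loop_def)
  qed
  have cvx: "convex ?U" by (simp add: convex_Times)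
  obtain G where cG: "continuous_on ?U G" and GC: "G \<in> ?U \<rightarrow> Sp1 \<times> Sp1"
    and pG: "\<And>y. y \<in> ?U \<Longrightarrow> pmap (G y) = H y"
    using covering_space_lift[OF covering_pmap convex_imp_simply_connected[OF cvx]
        convex_imp_locally_path_connected[OF cvx] cH HS] by blast
  define Lt where "Lt t = (\<lambda>k. G (k,t))" for t
  have Lt_lift: "is_lift (Lt t) (\<lambda>k. H (k,t))" if t: "t \<in> {0..1}" for t
    unfolding is_lift_def
  proof (intro conjI allI)
    have "continuous_on UNIV (\<lambda>k. G (k,t))"
      by (rule continuous_on_compose2[OF cG]) (use t in \<open>auto intro!: continuous_intros\<close>)
    then show "continuous_on UNIV (Lt t)" by (simp add: Lt_def)
    fix k
    show "Lt t k \<in> Sp1 \<times> Sp1" unfolding Lt_def by (rule funcset_mem[OF GC]) (use t in auto)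
    show "pmap (Lt t k) = H (k, t)" using pG t by (simp add: Lt_def)
  qed
  define P where "P t = (fst (G (0,t)))$1 * (fst (G (pi,t)))$1" for t
  have cP: "continuous_on {0..1} P"
  proof -
    have a: "continuous_on {0..1} (\<lambda>t. G (x,t))" for x
      by (rule continuous_on_compose2[OF cG]) (auto intro!: continuous_intros)
    show ?thesis unfolding P_def
      by (intro continuous_intros a)
  qed
  have vals: "P t = -1 \<or> P t = 0 \<or> P t = 1" if t: "t \<in> {0..1}" for t
  proof -
    define L where "L = Lt t"
    have LC: "\<And>k. L k \<in> Sp1 \<times> Sp1" and pL: "\<And>k. pmap (L k) = H (k,t)"
      using Lt_lift[OF t] by (simp_all add: is_lift_def L_def)
    have unit: "norm (fst (L k)) = 1" for k using LC[of k] by (auto simp: Sp1_def)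
    have A: "fst (L 0) = qconj (fst (L 0)) \<or> fst (L 0) = - qconj (fst (L 0))"
      using sym_fst[OF SL[OF t] LC pL, of 0] by simp
    have per0: "\<forall>k. H (k + 2*pi, t) = H (k, t)" using SL[OF t] by (simp add: symmetric_loop_def)
    then have "H (- pi + 2 * pi, t) = H (- pi, t)" by blast
    then have "pmap (L (- pi)) = pmap (L pi)" using pL[of pi] pL[of "- pi"] by simp
    then have per: "L (- pi) = L pi \<or> L (- pi) = - L pi" using pmap_fiber'[OF LC LC] by blast
    have B0: "fst (L pi) = qconj (fst (L (- pi))) \<or> fst (L pi) = - qconj (fst (L (- pi)))"
      using sym_fst[OF SL[OF t] LC pL, of pi] .
    have xy: "fst (L (- pi)) = fst (L pi) \<or> fst (L (- pi)) = - fst (L pi)"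
      using per by (metis fst_uminus)
    have B: "fst (L pi) = qconj (fst (L pi)) \<or> fst (L pi) = - qconj (fst (L pi))"
      using xy B0 by (metis qconj_minus minus_minus)
    have "P t = (fst (L 0))$1 * (fst (L pi))$1" by (simp add: P_def L_def Lt_def)
    then show ?thesis using re_vals[OF unit A] re_vals[OF unit B] by auto
  qed
  have P0: "P 0 = cos (of_int n * pi)"
  proof -
    have "(\<lambda>k. H (k, 0)) = Wn n" using H0 by auto
    then have "is_lift (Lt 0) (Wn n)" using Lt_lift[of 0] by simp
    then have "Lt 0 = Wn_lift n \<or> Lt 0 = (\<lambda>k. - Wn_lift n k)" using lift_pm is_lift_Wn by blast
    then show ?thesis
    proof
      assume e: "Lt 0 = Wn_lift n"
      have "P 0 = fst (Lt 0 0) $ 1 * fst (Lt 0 pi) $ 1" by (simp add: P_def Lt_def)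
      then show ?thesis unfolding e by (simp add: Wn_lift_def)
    next
      assume e: "Lt 0 = (\<lambda>k. - Wn_lift n k)"
      have "P 0 = fst (Lt 0 0) $ 1 * fst (Lt 0 pi) $ 1" by (simp add: P_def Lt_def)
      then show ?thesis unfolding e by (simp add: Wn_lift_def)
    qed
  qed
  have P1: "P 1 = 1"
  proof -
    have "(\<lambda>k. H (k, 1)) = (\<lambda>k. mat 1)" using H1 by auto
    then have l1: "is_lift (Lt 1) (\<lambda>k. mat 1)" using Lt_lift[of 1] by simp
    have l2: "is_lift (\<lambda>k. (q1, q1)) (\<lambda>k. mat 1)"
      by (simp add: is_lift_def pmap_11 Sp1_def)
    have "Lt 1 = (\<lambda>k. (q1, q1)) \<or> Lt 1 = (\<lambda>k. - (q1, q1))" using lift_pm[OF l1 l2] .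
    then show ?thesis
    proof
      assume e: "Lt 1 = (\<lambda>k. (q1, q1))"
      have "P 1 = fst (Lt 1 0) $ 1 * fst (Lt 1 pi) $ 1" by (simp add: P_def Lt_def)
      then show ?thesis unfolding e by simp
    next
      assume e: "Lt 1 = (\<lambda>k. - (q1, q1))"
      have "P 1 = fst (Lt 1 0) $ 1 * fst (Lt 1 pi) $ 1" by (simp add: P_def Lt_def)
      then show ?thesis unfolding e by simp
    qed
  qed
  show "even n"
  proof (rule ccontr)
    assume "odd n"
    then have "P 0 = -1" using P0 cos_npi_int[of n] by (simp add: mult.commute)
    have conn: "connected (P ` {0..1})" by (rule connected_continuous_image[OF cP]) simp
    have "1/2 \<in> P ` {0..1}"
      by (rule connectedD_interval[OF conn, of "-1" 1]) (use \<open>P 0 = -1\<close> P1 in \<open>force+\<close>)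
    then show False using vals by force
  qed
qed

theorem mainTheorem7:
  fixes n :: int
  shows "symmetric_loop (Wn n)
    \<and> loop_homotopic_SO4 (Wn n) (\<lambda>k. mat 1)
    \<and> is_lift (Wn_lift n) (Wn n) \<and> Wn_lift n 0 = (qmk 1 0 0 0, qmk 1 0 0 0)
    \<and> (\<forall>L. is_lift L (Wn n) \<and> L 0 = (qmk 1 0 0 0, qmk 1 0 0 0) \<longrightarrow> L = Wn_lift n)
    \<and> Wn_lift n pi = (qmk ((-1) ^ nat \<bar>n\<bar>) 0 0 0, qmk 1 0 0 0)
    \<and> ((\<exists>H. symmetric_homotopy H \<and> (\<forall>k. H (k, 0) = Wn n k) \<and> (\<forall>k. H (k, 1) = mat 1))
        \<longleftrightarrow> even n)"
proof (intro conjI)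
  show "symmetric_loop (Wn n)" by (rule symmetric_Wn)
  show "loop_homotopic_SO4 (Wn n) (\<lambda>k. mat 1)" by (rule loop_hom_Wn)
  show "is_lift (Wn_lift n) (Wn n)" by (rule is_lift_Wn)
  show "Wn_lift n 0 = (qmk 1 0 0 0, qmk 1 0 0 0)" by (rule Wn_lift_0)
  show "\<forall>L. is_lift L (Wn n) \<and> L 0 = (qmk 1 0 0 0, qmk 1 0 0 0) \<longrightarrow> L = Wn_lift n"
  proof (intro allI impI)
    fix L assume "is_lift L (Wn n) \<and> L 0 = (qmk 1 0 0 0, qmk 1 0 0 0)"
    then show "L = Wn_lift n" by (elim conjE) (rule lift_unique_Wn)
  qed
  show "Wn_lift n pi = (qmk ((-1) ^ nat \<bar>n\<bar>) 0 0 0, qmk 1 0 0 0)" by (rule Wn_lift_pi)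
  show "(\<exists>H. symmetric_homotopy H \<and> (\<forall>k. H (k, 0) = Wn n k) \<and> (\<forall>k. H (k, 1) = mat 1))
        \<longleftrightarrow> even n"
  proof
    assume "\<exists>H. symmetric_homotopy H \<and> (\<forall>k. H (k, 0) = Wn n k) \<and> (\<forall>k. H (k, 1) = mat 1)"
    then obtain H where h: "symmetric_homotopy H" "\<forall>k. H (k, 0) = Wn n k" "\<forall>k. H (k, 1) = mat 1"
      by blast
    show "even n" by (rule sym_hom_even[OF h(1)]) (use h in simp_all)
  next
    assume "even n"
    then show "\<exists>H. symmetric_homotopy H \<and> (\<forall>k. H (k, 0) = Wn n k) \<and> (\<forall>k. H (k, 1) = mat 1)"
      by (rule even_hom)
  qed
qed

end
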